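(* Let $S=\{\rho_1=0<\rho_2<\cdots\}$ be a numerical semigroup. For a positive integer $d$ let $S_d=\{\rho\in S:\ \#A[\rho]=d\}$. The following are equivalent: (a) $\#A[2\rho_i]=2i-1$ for every positive integer $i$; (b) $\#S_d=1$ for every odd positive integer $d$; (c) $S$ is an Arf semigroup.
   Context: A numerical semigroup is a submonoid $S$ of $(\mathbb{N}_0,+)$ with finite complement, with elements listed increasingly. $S$ is Arf if $\rho_i+\rho_j-\rho_k\in S$ for all positive integers $i\ge j\ge k$. For $\rho\in S$, $A[\rho]=\{p\in S:\ \rho-p\in S\}$. *)

theory Defs
  imports Main "HOL-Library.Infinite_Set"
begin

definition numerical_semigroup :: "nat set \<Rightarrow> bool" where
  "numerical_semigroup S \<longleftrightarrow>
     0 \<in> S \<and> (\<forall>a\<in>S. \<forall>b\<in>S. a + b \<in> S) \<and> finite (UNIV - S)"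

definition rho :: "nat set \<Rightarrow> nat \<Rightarrow> nat" where
  "rho S i = Infinite_Set.enumerate S (i - 1)"

text \<open>A[r] = {p in S. r - p in S} (with p \<le> r, since r - p must be a natural number).\<close>
definition Aset :: "nat set \<Rightarrow> nat \<Rightarrow> nat set" where
  "Aset S r = {p \<in> S. p \<le> r \<and> r - p \<in> S}"

definition Sd :: "nat set \<Rightarrow> nat \<Rightarrow> nat set" where
  "Sd S d = {r \<in> S. card (Aset S r) = d}"

definition Arf :: "nat set \<Rightarrow> bool" where
  "Arf S \<longleftrightarrow> (\<forall>i j k. 0 < k \<and> k \<le> j \<and> j \<le> i \<longrightarrow>
                      rho S i + rho S j - rho S k \<in> S)"

end

theory Submission
  imports Defs
begin

lemma card_Aset_split:
  "card (Aset S r) = 2 * card {p\<in>S. 2*p<r \<and> r-p\<in>S} + card {p\<in>S. 2*p=r}"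
proof -
  define L where "L = {p\<in>S. 2*p<r \<and> r-p\<in>S}"
  define H where "H = {p\<in>S. 2*p>r \<and> p \<le> r \<and> r-p\<in>S}"
  define M where "M = {p\<in>S. 2*p=r}"
  have A: "Aset S r = (L \<union> H) \<union> M"
    
  proof
    show "Aset S r \<subseteq> (L \<union> H) \<union> M"
    proof
      fix p assume "p \<in> Aset S r"
      hence p: "p \<in> S" "p \<le> r" "r - p \<in> S" unfolding Aset_def by auto
      show "p \<in> (L \<union> H) \<union> M"
      proof (cases "2*p < r")
        case True thus ?thesis using p unfolding L_def by auto
      next
        case False
        show ?thesis
        proof (cases "2*p = r")
          case True thus ?thesis using p unfolding M_def by auto
        next
          case F2: False
          thus ?thesis using p False unfolding H_def by auto
        qed
      qed
    qed
    show "(L \<union> H) \<union> M \<subseteq> Aset S r" unfolding Aset_def L_def H_def M_def by auto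
  qed
  have fL: "finite L" unfolding L_def by (rule finite_subset[of _ "{..r}"]) auto
  have fH: "finite H" unfolding H_def by (rule finite_subset[of _ "{..r}"]) auto
  have fM: "finite M" unfolding M_def by (rule finite_subset[of _ "{..r}"]) auto
  have HL: "H = (\<lambda>p. r - p) ` L"
  proof
    show "H \<subseteq> (\<lambda>p. r - p) ` L"
    proof
      fix q assume q: "q \<in> H"
      hence "r - q \<in> L" "q = r - (r - q)" unfolding H_def L_def by auto
      thus "q \<in> (\<lambda>p. r - p) ` L" by blast
    qed
    show "(\<lambda>p. r - p) ` L \<subseteq> H" unfolding H_def L_def by auto
  qed
  have inj: "inj_on (\<lambda>p. r - p) L" unfolding L_def inj_on_def by auto
  have cH: "card H = card L" using HL card_image[OF inj] by simp
  have "card (Aset S r) = card (L \<union> H) + card M"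
    unfolding A by (rule card_Un_disjoint) (use fL fH fM in \<open>auto simp: L_def H_def M_def\<close>)
  also have "card (L \<union> H) = card L + card H"
    by (rule card_Un_disjoint) (use fL fH in \<open>auto simp: L_def H_def\<close>)
  finally show ?thesis using cH unfolding L_def M_def by simp
qed

definition cc :: "nat set \<Rightarrow> nat \<Rightarrow> nat" where
  "cc S x = card {y\<in>S. y<x \<and> 2*x-y\<in>S}"

lemma card_A2:
  assumes "x \<in> S" shows "card (Aset S (2*x)) = 2 * cc S x + 1"
proof -
  have "{p\<in>S. 2*p<2*x \<and> 2*x-p\<in>S} = {y\<in>S. y<x \<and> 2*x-y\<in>S}" by auto
  moreover have "{p\<in>S. 2*p=2*x} = {x}" using assms by auto
  ultimately show ?thesis using card_Aset_split[of S "2*x"] unfolding cc_def by simp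
qed

lemma odd_card_A:
  assumes "odd (card (Aset S r))" shows "\<exists>x\<in>S. r = 2*x"
proof (rule ccontr)
  assume "\<not> ?thesis"
  hence E: "{p\<in>S. 2*p=r} = {}" by auto
  have "card (Aset S r) = 2 * card {p\<in>S. 2*p<r \<and> r-p\<in>S}" using card_Aset_split[of S r] unfolding E by simp
  thus False using assms card_Aset_split[of S r] by simp
qed

lemma all_in:
  assumes "0 \<in> (T::nat set)" "1 \<in> T" "\<forall>t\<in>T. \<forall>u\<in>T. u \<le> t \<longrightarrow> 2*t-u \<in> T"
  shows "n \<in> T"
proof -
  have "n \<in> T \<and> Suc n \<in> T" for n
  proof (induction n)
    case 0 then show ?case using assms by simp
  next
    case (Suc n)
    then have "2 * Suc n - n \<in> T" using assms(3) by (meson le_SucI order_refl)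
    moreover have "2 * Suc n - n = Suc (Suc n)" by simp
    ultimately show ?case using Suc by simp
  qed
  thus ?thesis by simp
qed

lemma T_add:
  "finite (-T) \<Longrightarrow> 0 \<in> (T::nat set) \<Longrightarrow> (\<forall>t\<in>T. \<forall>u\<in>T. u \<le> t \<longrightarrow> 2*t-u \<in> T)
   \<Longrightarrow> a \<in> T \<Longrightarrow> b \<in> T \<Longrightarrow> a + b \<in> T"
proof (induction "card (-T)" arbitrary: T a b rule: less_induct)
  case less
  show ?case
  proof (cases "a = 0 \<or> b = 0")
    case True then show ?thesis using less.prems by auto
  next
    case False
    define m where "m = (LEAST t. t \<in> T \<and> t > 0)"
    have mT: "m \<in> T \<and> m > 0" unfolding m_def
      by (rule LeastI[of _ a]) (use False less.prems in auto)
    have mle: "t \<in> T \<Longrightarrow> t > 0 \<Longrightarrow> m \<le> t" for t unfolding m_def by (rule Least_le) auto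
    show ?thesis
    proof (cases "m = 1")
      case True
      then show ?thesis using all_in[of T] mT less.prems by blast
    next
      case False
      hence m2: "m \<ge> 2" using mT by auto
      define T' where "T' = {x. x + m \<in> T}"
      have one: "1 \<notin> T" using mle m2 by fastforce
      have sub: "(\<lambda>g. g + m) ` (-T') \<subseteq> (-T) - {1}" unfolding T'_def using m2 by auto
      have inj: "inj_on (\<lambda>g. g + m) (-T')" by (auto simp: inj_on_def)
      have fin: "finite (-T')"
        using finite_subset[OF sub] less.prems(1) finite_imageD[OF _ inj] by blast
      have "card (-T') = card ((\<lambda>g. g + m) ` (-T'))" using card_image[OF inj] by simp
      also have "\<dots> \<le> card ((-T) - {1})" by (rule card_mono) (use sub less.prems(1) in auto)
      also have "\<dots> < card (-T)" using one less.prems(1)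
        by (metis Compl_iff card_Diff1_less)
      finally have lt: "card (-T') < card (-T)" .
      have z: "0 \<in> T'" using mT T'_def by simp
      have cl: "\<forall>t\<in>T'. \<forall>u\<in>T'. u \<le> t \<longrightarrow> 2*t-u \<in> T'"
      proof (intro ballI impI)
        fix t u assume "t \<in> T'" "u \<in> T'" "u \<le> t"
        hence "2*(t+m) - (u+m) \<in> T" using less.prems(3) unfolding T'_def by (meson add_le_mono1 mem_Collect_eq)
        moreover have "2*(t+m) - (u+m) = (2*t-u) + m" using \<open>u \<le> t\<close> by simp
        ultimately show "2*t-u \<in> T'" unfolding T'_def by simp
      qed
      note IH = less.hyps[OF lt fin z cl]
      have ma: "m \<le> a" "m \<le> b" using mle less.prems(4,5) \<open>\<not> (a = 0 \<or> b = 0)\<close> by auto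
      have am: "a - m \<in> T'" "b - m \<in> T'" using ma less.prems(4,5)
        unfolding T'_def by auto
      have "2*m - 0 \<in> T" using less.prems(3) mT less.prems(2) by blast
      hence "m \<in> T'" unfolding T'_def by (simp add: mult_2)
      have "(a - m) + (b - m) \<in> T'" by (rule IH[OF am])
      hence "(a - m) + (b - m) + m \<in> T'" using IH \<open>m \<in> T'\<close> by blast
      moreover have "(a - m) + (b - m) + m + m = a + b"
        using ma by simp
      ultimately show ?thesis unfolding T'_def by simp
    qed
  qed
qed

lemma inj_id_le:
  fixes g :: "nat \<Rightarrow> nat"
  assumes "\<And>n. g n \<le> n" "inj g" shows "g n = n"
proof (induction n rule: less_induct)
  case (less n)
  show ?case
  proof (rule ccontr)
    assume "g n \<noteq> n"
    hence "g n < n" using assms(1)[of n] by simp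
    hence "g (g n) = g n" using less by blast
    hence "g n = n" using assms(2) by (simp add: inj_eq)
    thus False using \<open>g n \<noteq> n\<close> by simp
  qed
qed

lemma two_x_minus:
  assumes ns: "numerical_semigroup S"
  shows "(\<forall>x\<in>S. \<forall>y\<in>S. \<forall>z\<in>S. z \<le> y \<and> y \<le> x \<longrightarrow> x + y - z \<in> S)
     \<longleftrightarrow> (\<forall>x\<in>S. \<forall>y\<in>S. y < x \<longrightarrow> 2*x - y \<in> S)"
proof
  assume "\<forall>x\<in>S. \<forall>y\<in>S. \<forall>z\<in>S. z \<le> y \<and> y \<le> x \<longrightarrow> x + y - z \<in> S"
  thus "\<forall>x\<in>S. \<forall>y\<in>S. y < x \<longrightarrow> 2*x - y \<in> S" by (simp add: mult_2)
next
  assume H: "\<forall>x\<in>S. \<forall>y\<in>S. y < x \<longrightarrow> 2*x - y \<in> S"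
  have fS: "finite (-S)" using ns unfolding numerical_semigroup_def by (simp add: Compl_eq_Diff_UNIV)
  show "\<forall>x\<in>S. \<forall>y\<in>S. \<forall>z\<in>S. z \<le> y \<and> y \<le> x \<longrightarrow> x + y - z \<in> S"
  proof (intro ballI impI)
    fix x y z assume xyz: "x \<in> S" "y \<in> S" "z \<in> S" "z \<le> y \<and> y \<le> x"
    define T where "T = {t. z + t \<in> S}"
    have "-T \<subseteq> (\<lambda>g. g - z) ` (-S)"
    proof
      fix t assume "t \<in> -T"
      hence "z + t \<in> -S" "t = (z + t) - z" unfolding T_def by auto
      thus "t \<in> (\<lambda>g. g - z) ` (-S)" by blast
    qed
    hence fT: "finite (-T)" using fS finite_subset by blast
    have T0: "0 \<in> T" using xyz unfolding T_def by simp
    have Tc: "\<forall>t\<in>T. \<forall>u\<in>T. u \<le> t \<longrightarrow> 2*t-u \<in> T"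
    proof (intro ballI impI)
      fix t u assume tu: "t \<in> T" "u \<in> T" "u \<le> t"
      show "2*t-u \<in> T"
      proof (cases "u = t")
        case True thus ?thesis using tu by simp
      next
        case False
        hence "z+u < z+t" using tu by simp
        hence "2*(z+t) - (z+u) \<in> S" using H tu unfolding T_def by blast
        moreover have "2*(z+t) - (z+u) = z + (2*t-u)" using tu by simp
        ultimately show ?thesis unfolding T_def by simp
      qed
    qed
    have "x - z \<in> T" "y - z \<in> T" using xyz unfolding T_def by auto
    hence "(x - z) + (y - z) \<in> T" using T_add[OF fT T0 Tc] by blast
    moreover have "z + ((x - z) + (y - z)) = x + y - z" using xyz by simp
    ultimately show "x + y - z \<in> S" unfolding T_def by simp
  qed
qed

theorem mainTheorem12:
  fixes S :: "nat set"
  assumes "numerical_semigroup S"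
  shows "((\<forall>i>0. card (Aset S (2 * rho S i)) = 2 * i - 1)
            \<longleftrightarrow> (\<forall>d. odd d \<longrightarrow> card (Sd S d) = 1))
       \<and> ((\<forall>d. odd d \<longrightarrow> card (Sd S d) = 1) \<longleftrightarrow> Arf S)"
proof -
  define e where "e = enumerate S"
  have S0: "0 \<in> S" and Sadd: "\<And>a b. a \<in> S \<Longrightarrow> b \<in> S \<Longrightarrow> a + b \<in> S"
    and fS: "finite (-S)"
    using assms unfolding numerical_semigroup_def by (auto simp: Compl_eq_Diff_UNIV)
  have inf: "infinite S"
  proof
    assume "finite S"
    hence "finite (S \<union> -S)" using fS by blast
    thus False by simp
  qed
  have eS: "e n \<in> S" for n unfolding e_def using enumerate_in_set[OF inf] .
  have elt: "e m < e n \<longleftrightarrow> m < n" for m n unfolding e_def using inf by simp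
  have eeq: "e m = e n \<longleftrightarrow> m = n" for m n using elt by (metis less_irrefl linorder_neqE_nat)
  have eEx: "x \<in> S \<Longrightarrow> \<exists>n. e n = x" for x unfolding e_def using enumerate_Ex[OF inf] by blast
  have rhoe: "rho S i = e (i - 1)" for i unfolding rho_def e_def ..
  define g where "g n = cc S (e n)" for n
  have low: "{y\<in>S. y < e n} = e ` {..<n}" for n
  proof
    show "{y\<in>S. y < e n} \<subseteq> e ` {..<n}"
    proof
      fix y assume "y \<in> {y\<in>S. y < e n}"
      then obtain m where "e m = y" "y < e n" using eEx by blast
      thus "y \<in> e ` {..<n}" using elt by auto
    qed
    show "e ` {..<n} \<subseteq> {y\<in>S. y < e n}" using eS elt by auto
  qed
  have injE: "inj_on e X" for X using eeq by (simp add: inj_on_def)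
  have cardlow: "card {y\<in>S. y < e n} = n" for n
    unfolding low using card_image[OF injE] by simp
  have sublow: "{y\<in>S. y < e n \<and> 2 * e n - y \<in> S} \<subseteq> {y\<in>S. y < e n}" for n by auto
  have finlow: "finite {y\<in>S. y < e n}" for n unfolding low by simp
  have gle: "g n \<le> n" for n
    unfolding g_def cc_def using card_mono[OF finlow sublow] cardlow by simp
  have G: "g n = n \<longleftrightarrow> (\<forall>y\<in>S. y < e n \<longrightarrow> 2 * e n - y \<in> S)" for n
  proof
    assume "g n = n"
    hence "card {y\<in>S. y < e n \<and> 2 * e n - y \<in> S} = card {y\<in>S. y < e n}"
      unfolding g_def cc_def cardlow .
    hence "{y\<in>S. y < e n \<and> 2 * e n - y \<in> S} = {y\<in>S. y < e n}"
      using card_subset_eq[OF finlow sublow] by simp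
    thus "\<forall>y\<in>S. y < e n \<longrightarrow> 2 * e n - y \<in> S" by blast
  next
    assume "\<forall>y\<in>S. y < e n \<longrightarrow> 2 * e n - y \<in> S"
    hence "{y\<in>S. y < e n \<and> 2 * e n - y \<in> S} = {y\<in>S. y < e n}" by blast
    thus "g n = n" unfolding g_def cc_def using cardlow by simp
  qed
  define P where "P = (\<forall>n. g n = n)"
  have PQ: "P \<longleftrightarrow> (\<forall>x\<in>S. \<forall>y\<in>S. y < x \<longrightarrow> 2*x - y \<in> S)"
    unfolding P_def G using eS eEx by metis
  have cA: "card (Aset S (2 * e n)) = 2 * g n + 1" for n
    unfolding g_def using card_A2[OF eS] .
  have a: "(\<forall>i>0. card (Aset S (2 * rho S i)) = 2 * i - 1) \<longleftrightarrow> P"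
  proof
    assume H: "\<forall>i>0. card (Aset S (2 * rho S i)) = 2 * i - 1"
    show P unfolding P_def
    proof
      fix n
      have "card (Aset S (2 * rho S (Suc n))) = 2 * Suc n - 1" using H by blast
      thus "g n = n" unfolding rhoe cA by simp
    qed
  next
    assume P
    show "\<forall>i>0. card (Aset S (2 * rho S i)) = 2 * i - 1"
    proof (intro allI impI)
      fix i :: nat assume "i > 0"
      thus "card (Aset S (2 * rho S i)) = 2 * i - 1" unfolding rhoe cA
        using \<open>P\<close> unfolding P_def by simp
    qed
  qed
  have Sd_char: "r \<in> Sd S (2*k+1) \<longleftrightarrow> (\<exists>n. r = 2 * e n \<and> g n = k)" for r k
  proof
    assume r: "r \<in> Sd S (2*k+1)"
    hence "odd (card (Aset S r))" unfolding Sd_def by simp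
    then obtain x where "x \<in> S" "r = 2*x" using odd_card_A by blast
    then obtain n where n: "r = 2 * e n" using eEx by blast
    have "card (Aset S (2 * e n)) = 2*k+1" using r unfolding Sd_def n by simp
    hence "2 * g n + 1 = 2*k+1" unfolding cA .
    thus "\<exists>n. r = 2 * e n \<and> g n = k" using n by auto
  next
    assume "\<exists>n. r = 2 * e n \<and> g n = k"
    then obtain n where n: "r = 2 * e n" "g n = k" by blast
    have "r \<in> S" using n Sadd[OF eS eS] by (simp add: mult_2)
    thus "r \<in> Sd S (2*k+1)" unfolding Sd_def using n cA by simp
  qed
  have b: "(\<forall>d. odd d \<longrightarrow> card (Sd S d) = 1) \<longleftrightarrow> P"
  proof
    assume H: "\<forall>d. odd d \<longrightarrow> card (Sd S d) = 1"
    have "inj g"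
    proof (rule injI)
      fix n m assume gnm: "g n = g m"
      have c1: "card (Sd S (2 * g n + 1)) = 1" using H by simp
      have "2 * e n \<in> Sd S (2 * g n + 1)" "2 * e m \<in> Sd S (2 * g n + 1)"
        using Sd_char gnm by auto
      hence "2 * e n = 2 * e m" using c1 by (metis card_1_singletonE singletonD)
      thus "n = m" using eeq by simp
    qed
    thus P unfolding P_def using inj_id_le gle by blast
  next
    assume P
    show "\<forall>d. odd d \<longrightarrow> card (Sd S d) = 1"
    proof (intro allI impI)
      fix d :: nat assume "odd d"
      then obtain k where k: "d = 2*k+1" using oddE by blast
      have "Sd S d = {2 * e k}" unfolding k using Sd_char \<open>P\<close> unfolding P_def by auto
      thus "card (Sd S d) = 1" by simp
    qed
  qed
  have arfQ: "Arf S \<longleftrightarrow> (\<forall>x\<in>S. \<forall>y\<in>S. \<forall>z\<in>S. z \<le> y \<and> y \<le> x \<longrightarrow> x + y - z \<in> S)"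
  proof
    assume A: "Arf S"
    show "\<forall>x\<in>S. \<forall>y\<in>S. \<forall>z\<in>S. z \<le> y \<and> y \<le> x \<longrightarrow> x + y - z \<in> S"
    proof (intro ballI impI)
      fix x y z assume xyz: "x \<in> S" "y \<in> S" "z \<in> S" "z \<le> y \<and> y \<le> x"
      obtain a b c where abc: "x = e a" "y = e b" "z = e c" using eEx xyz(1-3) by metis
      have "c \<le> b" "b \<le> a" using xyz(4) elt unfolding abc by (meson not_le)+
      hence "rho S (Suc a) + rho S (Suc b) - rho S (Suc c) \<in> S"
        using A unfolding Arf_def by auto
      thus "x + y - z \<in> S" unfolding rhoe abc by simp
    qed
  next
    assume Q: "\<forall>x\<in>S. \<forall>y\<in>S. \<forall>z\<in>S. z \<le> y \<and> y \<le> x \<longrightarrow> x + y - z \<in> S"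
    show "Arf S" unfolding Arf_def
    proof (intro allI impI)
      fix i j k :: nat assume ijk: "0 < k \<and> k \<le> j \<and> j \<le> i"
      have "e (k-1) \<le> e (j-1)" "e (j-1) \<le> e (i-1)" using ijk elt by (meson diff_le_mono not_le)+
      thus "rho S i + rho S j - rho S k \<in> S" unfolding rhoe using Q eS by blast
    qed
  qed
  have c: "Arf S \<longleftrightarrow> P" unfolding arfQ two_x_minus[OF assms] PQ ..
  show ?thesis using a b c by blast
qed

end
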